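(* Let $G$ be split with root system of type $F_4$, simple roots $\alpha_1,\alpha_2,\alpha_3,\alpha_4$ in Bourbaki labelling ($\alpha_1,\alpha_2$ long, $\alpha_3,\alpha_4$ short), and let $\widetilde G$ be any $n$-fold Brylinski--Deligne cover associated with a Weyl-invariant quadratic form $Q$. If $n_{\alpha_1}=2n_{\alpha_4}$, then $$f_X(\Phi^\vee_+)=f_Y(\Phi_+)=\frac{1}{n_{\alpha_4}}[1,8]\cup\frac{1}{2n_{\alpha_4}}\{1,3,5,7,9,11\}.$$ If $n_\alpha$ is constant on $\alpha\in\Delta$, then $f_X(\Phi^\vee_+)=f_Y(\Phi_+)=\frac{1}{n_\alpha}[1,11]$.
   Context: $[a,b]$ denotes $\{a,\dots,b\}$. Notation: $\omega_\alpha$ fundamental weights, $\omega^\vee_\alpha$ fundamental coweights, $\rho^\vee=\sum_{\alpha\in\Delta}\omega_\alpha^\vee$. $B_Q(y,z)=Q(y+z)-Q(y)-Q(z)$, $Y_{Q,n}=\{y\in Y:B_Q(y,z)\in n\mathbf Z\ \forall z\in Y\}$, $n_\alpha=n/\gcd(n,Q(\alpha^\vee))$, and $\tilde n_\alpha$ ($\alpha\in\Phi$) defined by $\mathbf Z\alpha^\vee\cap Y_{Q,n}=\mathbf Z\tilde n_\alpha\alpha^\vee$ (for type $F_4$ one has $\tilde n_\alpha=n_\alpha$). $f_X:\Phi_+^\vee\to\mathbf Q$, $f_X(\beta^\vee)=\sum_{\alpha\in\Delta}\langle\omega_\alpha/\tilde n_\alpha,\beta^\vee\rangle$; $f_Y:\Phi_+\to\mathbf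 Q$, $f_Y(\beta)=\langle\rho^\vee,\beta\rangle/\tilde n_\beta$. *)

theory Defs
  imports Main "HOL.Rat"
begin

text \<open>Since F4 is both simply connected and adjoint, the cocharacter lattice Y is the
  coroot lattice.  Elements of X-side roots are written in coordinates w.r.t. the
  simple roots alpha_1..alpha_4, elements of Y in coordinates w.r.t. the simple
  coroots alpha_1^vee..alpha_4^vee; vectors are functions nat => int supported on 1..4.\<close>

type_synonym vec = "nat \<Rightarrow> int"

definition v4 :: "int \<Rightarrow> int \<Rightarrow> int \<Rightarrow> int \<Rightarrow> vec" where
  "v4 a b c d = (\<lambda>i. if i = 1 then a else if i = 2 then b else if i = 3 then c
                      else if i = 4 then d else 0)"

definition vadd :: "vec \<Rightarrow> vec \<Rightarrow> vec" where
  "vadd y z = (\<lambda>i. y i + z i)"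

definition smul :: "int \<Rightarrow> vec \<Rightarrow> vec" where
  "smul k y = (\<lambda>i. k * y i)"

definition Ylat :: "vec set" where
  "Ylat = {y. \<forall>i. i \<notin> {1..4} \<longrightarrow> y i = 0}"

definition F4_pos_roots :: "vec set" where
  "F4_pos_roots = set
    [v4 1 0 0 0, v4 0 1 0 0, v4 1 1 0 0, v4 0 1 2 0, v4 1 1 2 0, v4 1 2 2 0,
     v4 0 1 2 2, v4 1 1 2 2, v4 1 2 2 2, v4 1 2 4 2, v4 1 3 4 2, v4 2 3 4 2,
     v4 0 0 1 0, v4 0 0 0 1, v4 0 0 1 1, v4 0 1 1 0, v4 1 1 1 0, v4 0 1 1 1,
     v4 1 1 1 1, v4 0 1 2 1, v4 1 1 2 1, v4 1 2 2 1, v4 1 2 3 1, v4 1 2 3 2]"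

definition F4_roots :: "vec set" where
  "F4_roots = F4_pos_roots \<union> (\<lambda>a. smul (-1) a) ` F4_pos_roots"

definition simple_root :: "nat \<Rightarrow> vec" where
  "simple_root i = (\<lambda>j. if j = i then 1 else 0)"

text \<open>gram i j = 2 (alpha_i, alpha_j), normalised so that long roots have (a,a) = 2.\<close>
definition gram :: "nat \<Rightarrow> nat \<Rightarrow> int" where
  "gram i j =
    (if i = j then (if i \<le> 2 then 4 else 2)
     else if {i, j} = {1, 2} then -2
     else if {i, j} = {2, 3} then -2
     else if {i, j} = {3, 4} then -1 else 0)"

definition rip :: "vec \<Rightarrow> vec \<Rightarrow> int" where
  "rip a b = (\<Sum>i\<in>{1..4}. \<Sum>j\<in>{1..4}. a i * b j * gram i j)"

text \<open>Coroot a^vee = 2a/(a,a), in simple-coroot coordinates.\<close>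
definition coroot :: "vec \<Rightarrow> vec" where
  "coroot a = (\<lambda>i. a i * gram i i div rip a a)"

text \<open>Pairing <a, y> of a root a (simple-root coordinates) with y in Y
  (simple-coroot coordinates); <alpha_i, alpha_j^vee> = 2(alpha_i,alpha_j)/(alpha_j,alpha_j).\<close>
definition pair :: "vec \<Rightarrow> vec \<Rightarrow> int" where
  "pair a y = (\<Sum>i\<in>{1..4}. \<Sum>j\<in>{1..4}. a i * y j * (2 * gram i j div gram j j))"

definition refl :: "vec \<Rightarrow> vec \<Rightarrow> vec" where
  "refl a y = (\<lambda>i. y i - pair a y * coroot a i)"

definition BQ :: "(vec \<Rightarrow> int) \<Rightarrow> vec \<Rightarrow> vec \<Rightarrow> int" where
  "BQ Q y z = Q (vadd y z) - Q y - Q z"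

definition quadratic_form :: "(vec \<Rightarrow> int) \<Rightarrow> bool" where
  "quadratic_form Q \<longleftrightarrow>
     (\<forall>y\<in>Ylat. \<forall>k. Q (smul k y) = k ^ 2 * Q y) \<and>
     (\<forall>y\<in>Ylat. \<forall>z\<in>Ylat. \<forall>w\<in>Ylat. BQ Q (vadd y z) w = BQ Q y w + BQ Q z w)"

definition weyl_invariant :: "(vec \<Rightarrow> int) \<Rightarrow> bool" where
  "weyl_invariant Q \<longleftrightarrow> (\<forall>a\<in>F4_roots. \<forall>y\<in>Ylat. Q (refl a y) = Q y)"

definition YQn :: "(vec \<Rightarrow> int) \<Rightarrow> nat \<Rightarrow> vec set" where
  "YQn Q n = {y \<in> Ylat. \<forall>z\<in>Ylat. int n dvd BQ Q y z}"

definition n_al :: "(vec \<Rightarrow> int) \<Rightarrow> nat \<Rightarrow> vec \<Rightarrow> nat" where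
  "n_al Q n a = nat (int n div gcd (int n) (Q (coroot a)))"

definition n_til :: "(vec \<Rightarrow> int) \<Rightarrow> nat \<Rightarrow> vec \<Rightarrow> nat" where
  "n_til Q n a = (LEAST k::nat. 0 < k \<and> smul (int k) (coroot a) \<in> YQn Q n)"

text \<open>f_X(beta^vee) = sum_i <omega_i / tilde n_{alpha_i}, beta^vee>; the argument is the
  coroot beta^vee in simple-coroot coordinates, so <omega_i, beta^vee> = its i-th coordinate.\<close>
definition fX :: "(vec \<Rightarrow> int) \<Rightarrow> nat \<Rightarrow> vec \<Rightarrow> rat" where
  "fX Q n bv = (\<Sum>i\<in>{1..4}. of_int (bv i) / of_nat (n_til Q n (simple_root i)))"

text \<open>f_Y(beta) = <rho^vee, beta> / tilde n_beta; <rho^vee, beta> is the height of beta.\<close>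
definition fY :: "(vec \<Rightarrow> int) \<Rightarrow> nat \<Rightarrow> vec \<Rightarrow> rat" where
  "fY Q n b = of_int (\<Sum>i\<in>{1..4}. b i) / of_nat (n_til Q n b)"

end

theory Submission
  imports Defs
begin


lemma sum4: "(\<Sum>i\<in>{1..4::nat}. f i) = f 1 + f 2 + f 3 + f (4::nat)"
proof -
  have "{1..4::nat} = {1,2,3,4}" by auto
  then show ?thesis by (simp add: add.assoc)
qed

lemma sum4': "(\<Sum>i\<in>{Suc 0..4::nat}. f i) = f 1 + f 2 + f 3 + f (4::nat)"
  using sum4 by simp

lemma gram_vals[simp]:
  "gram 1 1 = 4" "gram 1 2 = -2" "gram 1 3 = 0" "gram 1 4 = 0"
  "gram 2 1 = -2" "gram 2 2 = 4" "gram 2 3 = -2" "gram 2 4 = 0"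
  "gram 3 1 = 0" "gram 3 2 = -2" "gram 3 3 = 2" "gram 3 4 = -1"
  "gram 4 1 = 0" "gram 4 2 = 0" "gram 4 3 = -1" "gram 4 4 = 2"
  "gram (Suc 0) (Suc 0) = 4" "gram (Suc 0) 2 = -2" "gram (Suc 0) 3 = 0" "gram (Suc 0) 4 = 0"
  "gram 2 (Suc 0) = -2" "gram 3 (Suc 0) = 0" "gram 4 (Suc 0) = 0"
  by (auto simp: gram_def doubleton_eq_iff)

lemma v4_app[simp]: "v4 a b c d 1 = a" "v4 a b c d (Suc 0) = a" "v4 a b c d 2 = b" "v4 a b c d 3 = c" "v4 a b c d 4 = d"
  by (simp_all add: v4_def)

lemma "coroot (v4 1 2 3 2) = v4 2 4 3 2"
  apply (rule ext) apply (simp add: coroot_def rip_def sum4 sum4') apply (simp add: v4_def)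
  done

lemma "refl (v4 1 0 0 0) (v4 0 1 1 0) = v4 1 1 1 0"
  apply (rule ext) apply (simp add: refl_def pair_def coroot_def rip_def sum4 sum4') apply (simp add: v4_def)
  done



lemma Ylat_vadd: "y \<in> Ylat \<Longrightarrow> z \<in> Ylat \<Longrightarrow> vadd y z \<in> Ylat"
  by (auto simp: Ylat_def vadd_def)
lemma Ylat_smul: "y \<in> Ylat \<Longrightarrow> smul k y \<in> Ylat"
  by (auto simp: Ylat_def smul_def)
lemma Ylat_sr: "i \<in> {1..4} \<Longrightarrow> simple_root i \<in> Ylat"
  by (auto simp: Ylat_def simple_root_def)
lemma Ylat_v4: "v4 a b c d \<in> Ylat"
  by (auto simp: Ylat_def v4_def)

lemma BQ_sym: "BQ Q y z = BQ Q z y"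
proof -
  have "vadd y z = vadd z y" by (auto simp: vadd_def)
  then show ?thesis by (simp add: BQ_def)
qed

lemma BQ_add:
  assumes "quadratic_form Q" "y \<in> Ylat" "z \<in> Ylat" "w \<in> Ylat"
  shows "BQ Q (vadd y z) w = BQ Q y w + BQ Q z w"
  using assms by (simp add: quadratic_form_def)

lemma BQ_smul:
  assumes "quadratic_form Q" "y \<in> Ylat" "w \<in> Ylat"
  shows "BQ Q (smul k y) w = k * BQ Q y w"
proof (induction k rule: int_induct[where k = 0])
  case base
  have z: "(\<lambda>_. 0::int) \<in> Ylat" by (simp add: Ylat_def)
  have "vadd (\<lambda>_. 0) (\<lambda>_. 0) = (\<lambda>_. 0::int)" by (simp add: vadd_def)
  then have "BQ Q (\<lambda>_. 0) w = BQ Q (\<lambda>_. 0) w + BQ Q (\<lambda>_. 0) w"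
    using BQ_add[OF assms(1) z z assms(3)] by simp
  moreover have "smul 0 y = (\<lambda>_. 0)" by (simp add: smul_def)
  ultimately show ?case by simp
next
  case (step1 i)
  have "smul (i+1) y = vadd (smul i y) y" by (auto simp: smul_def vadd_def algebra_simps)
  then show ?case using BQ_add[OF assms(1) Ylat_smul[OF assms(2)] assms(2) assms(3), of i] step1
    by (simp add: algebra_simps)
next
  case (step2 i)
  have "smul i y = vadd (smul (i - 1) y) y" by (auto simp: smul_def vadd_def algebra_simps)
  then show ?case using BQ_add[OF assms(1) Ylat_smul[OF assms(2)] assms(2) assms(3), of "i - 1"] step2
    by (simp add: algebra_simps)
qed

lemma decomp:
  assumes "y \<in> Ylat"
  shows "y = vadd (smul (y 1) (simple_root 1)) (vadd (smul (y 2) (simple_root 2))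
              (vadd (smul (y 3) (simple_root 3)) (smul (y 4) (simple_root 4))))"
proof
  fix i
  show "y i = vadd (smul (y 1) (simple_root 1)) (vadd (smul (y 2) (simple_root 2))
              (vadd (smul (y 3) (simple_root 3)) (smul (y 4) (simple_root 4)))) i"
  proof (cases "i \<in> {1..4}")
    case True
    then have "i = 1 \<or> i = 2 \<or> i = 3 \<or> i = 4" by auto
    then show ?thesis by (auto simp: vadd_def smul_def simple_root_def)
  next
    case False
    then show ?thesis using assms by (auto simp: vadd_def smul_def simple_root_def Ylat_def)
  qed
qed

lemma BQ_lin1:
  assumes "quadratic_form Q" "y \<in> Ylat" "w \<in> Ylat"
  shows "BQ Q y w = y 1 * BQ Q (simple_root 1) w + y 2 * BQ Q (simple_root 2) w
                  + y 3 * BQ Q (simple_root 3) w + y 4 * BQ Q (simple_root 4) w"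
proof -
  have s: "\<And>i. i \<in> {1..4} \<Longrightarrow> smul (y i) (simple_root i) \<in> Ylat"
    by (intro Ylat_smul Ylat_sr)
  have "BQ Q y w = BQ Q (vadd (smul (y 1) (simple_root 1)) (vadd (smul (y 2) (simple_root 2))
              (vadd (smul (y 3) (simple_root 3)) (smul (y 4) (simple_root 4))))) w"
    using decomp[OF assms(2)] by simp
  also have "\<dots> = y 1 * BQ Q (simple_root 1) w + y 2 * BQ Q (simple_root 2) w
                  + y 3 * BQ Q (simple_root 3) w + y 4 * BQ Q (simple_root 4) w"
    using assms s by (simp add: BQ_add Ylat_vadd BQ_smul Ylat_sr)
  finally show ?thesis .
qed

definition bb :: "(vec \<Rightarrow> int) \<Rightarrow> nat \<Rightarrow> nat \<Rightarrow> int" where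
  "bb Q i j = BQ Q (simple_root i) (simple_root j)"

lemma BQ_expand:
  assumes "quadratic_form Q" "y \<in> Ylat" "z \<in> Ylat"
  shows "BQ Q y z = (\<Sum>i\<in>{1..4}. \<Sum>j\<in>{1..4}. y i * z j * bb Q i j)"
proof -
  have r: "BQ Q (simple_root i) z = z 1 * bb Q i 1 + z 2 * bb Q i 2 + z 3 * bb Q i 3 + z 4 * bb Q i 4"
    if "i \<in> {1..4}" for i
    using BQ_lin1[OF assms(1) assms(3) Ylat_sr[OF that]] BQ_sym[of Q] by (simp add: bb_def)
  show ?thesis
    using BQ_lin1[OF assms(1) assms(2) assms(3)] r[of 1] r[of 2] r[of 3] r[of 4]
    by (simp add: sum4 sum4' algebra_simps)
qed

lemma Q_expand:
  assumes "quadratic_form Q" "y \<in> Ylat"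
  shows "2 * Q y = (\<Sum>i\<in>{1..4}. \<Sum>j\<in>{1..4}. y i * y j * bb Q i j)"
proof -
  have "vadd y y = smul 2 y" by (auto simp: vadd_def smul_def)
  moreover have "Q (smul 2 y) = 4 * Q y" using assms by (simp add: quadratic_form_def)
  ultimately have "BQ Q y y = 2 * Q y" by (simp add: BQ_def)
  then show ?thesis using BQ_expand[OF assms(1) assms(2) assms(2)] by simp
qed

lemma bb_sym: "bb Q i j = bb Q j i" by (simp add: bb_def BQ_sym)



lemma sr_v4: "simple_root 1 = v4 1 0 0 0" "simple_root 2 = v4 0 1 0 0"
  "simple_root 3 = v4 0 0 1 0" "simple_root 4 = v4 0 0 0 1"
  by (auto simp: simple_root_def v4_def)

lemma Q2_v4:
  assumes "quadratic_form Q"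
  shows "2 * Q (v4 a b c d) = a*a*bb Q 1 1 + b*b*bb Q 2 2 + c*c*bb Q 3 3 + d*d*bb Q 4 4
     + 2*a*b*bb Q 1 2 + 2*a*c*bb Q 1 3 + 2*a*d*bb Q 1 4 + 2*b*c*bb Q 2 3 + 2*b*d*bb Q 2 4 + 2*c*d*bb Q 3 4"
  using Q_expand[OF assms Ylat_v4[of a b c d]] bb_sym[of Q 2 1] bb_sym[of Q 3 1] bb_sym[of Q 4 1]
    bb_sym[of Q 3 2] bb_sym[of Q 4 2] bb_sym[of Q 4 3]
  by (simp add: sum4 sum4' algebra_simps)

lemma W:
  assumes "weyl_invariant Q" "a \<in> F4_roots" "refl a y = y'" "y \<in> Ylat"
  shows "2 * Q y' = 2 * Q y"
  using assms by (auto simp: weyl_invariant_def)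


lemma bb_vals:
  assumes q: "quadratic_form Q" and w: "weyl_invariant Q"
  defines "q \<equiv> Q (simple_root 1)"
  shows "bb Q 1 1 = 2*q" "bb Q 2 2 = 2*q" "bb Q 3 3 = 4*q" "bb Q 4 4 = 4*q"
    "bb Q 1 2 = -q" "bb Q 1 3 = 0" "bb Q 1 4 = 0" "bb Q 2 3 = -2*q" "bb Q 2 4 = 0" "bb Q 3 4 = -2*q"
proof -
  have r1: "v4 1 0 0 0 \<in> F4_roots" "v4 0 1 0 0 \<in> F4_roots" "v4 0 0 1 0 \<in> F4_roots" "v4 0 0 0 1 \<in> F4_roots"
    by (simp_all add: F4_roots_def F4_pos_roots_def)
  have e1: "refl (v4 1 0 0 0) (v4 0 1 0 0) = v4 1 1 0 0" by (rule ext, simp add: refl_def pair_def coroot_def rip_def sum4 sum4', simp add: v4_def)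
  have e2: "refl (v4 0 1 0 0) (v4 1 0 0 0) = v4 1 1 0 0" by (rule ext, simp add: refl_def pair_def coroot_def rip_def sum4 sum4', simp add: v4_def)
  have e3: "refl (v4 0 1 0 0) (v4 0 0 1 0) = v4 0 2 1 0" by (rule ext, simp add: refl_def pair_def coroot_def rip_def sum4 sum4', simp add: v4_def)
  have e4: "refl (v4 0 0 1 0) (v4 0 1 0 0) = v4 0 1 1 0" by (rule ext, simp add: refl_def pair_def coroot_def rip_def sum4 sum4', simp add: v4_def)
  have e5: "refl (v4 0 0 1 0) (v4 0 0 0 1) = v4 0 0 1 1" by (rule ext, simp add: refl_def pair_def coroot_def rip_def sum4 sum4', simp add: v4_def)
  have e6: "refl (v4 0 0 0 1) (v4 0 0 1 0) = v4 0 0 1 1" by (rule ext, simp add: refl_def pair_def coroot_def rip_def sum4 sum4', simp add: v4_def)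
  have e7: "refl (v4 1 0 0 0) (v4 0 1 1 0) = v4 1 1 1 0" by (rule ext, simp add: refl_def pair_def coroot_def rip_def sum4 sum4', simp add: v4_def)
  have e8: "refl (v4 1 0 0 0) (v4 0 1 0 1) = v4 1 1 0 1" by (rule ext, simp add: refl_def pair_def coroot_def rip_def sum4 sum4', simp add: v4_def)
  have e9: "refl (v4 0 1 0 0) (v4 1 0 0 1) = v4 1 1 0 1" by (rule ext, simp add: refl_def pair_def coroot_def rip_def sum4 sum4', simp add: v4_def)
  note E = W[OF w r1(1) e1 Ylat_v4] W[OF w r1(2) e2 Ylat_v4] W[OF w r1(2) e3 Ylat_v4]
    W[OF w r1(3) e4 Ylat_v4] W[OF w r1(3) e5 Ylat_v4] W[OF w r1(4) e6 Ylat_v4]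
    W[OF w r1(1) e7 Ylat_v4] W[OF w r1(1) e8 Ylat_v4] W[OF w r1(2) e9 Ylat_v4]
  note E' = E[unfolded Q2_v4[OF q]]
  have Q1: "2 * q = bb Q 1 1" using Q2_v4[OF q, of 1 0 0 0] unfolding q_def sr_v4(1) by simp
  show "bb Q 1 1 = 2*q" "bb Q 2 2 = 2*q" "bb Q 3 3 = 4*q" "bb Q 4 4 = 4*q"
    "bb Q 1 2 = -q" "bb Q 1 3 = 0" "bb Q 1 4 = 0" "bb Q 2 3 = -2*q" "bb Q 2 4 = 0" "bb Q 3 4 = -2*q"
    using E' Q1 by simp_all
qed



lemma least_dvd:
  fixes c :: int and n :: nat
  assumes "1 \<le> n"
  shows "(LEAST k::nat. 0 < k \<and> int n dvd int k * c) = nat (int n div gcd (int n) c)"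
proof -
  define g where "g = gcd (int n) c"
  have gpos: "g > 0" using assms by (simp add: g_def)
  obtain n' where n': "int n = g * n'" using gcd_dvd1[of "int n" c] unfolding g_def by (rule dvdE)
  obtain c' where c': "c = g * c'" using gcd_dvd2[of "int n" c] unfolding g_def by (rule dvdE)
  have cop: "coprime n' c'"
  proof -
    have "g * gcd n' c' = gcd (g * n') (g * c')" using gcd_mult_distrib_int[of g n' c'] gpos by simp
    also have "\<dots> = g" unfolding n'[symmetric] c'[symmetric] by (simp add: g_def)
    finally have "gcd n' c' = 1" using gpos by simp
    then show ?thesis by (simp add: coprime_iff_gcd_eq_1)
  qed
  have "0 < g * n'" using n' assms by linarith
  then have n'pos: "n' > 0" using gpos by (simp add: zero_less_mult_iff)
  have nd: "int n div g = n'" using n' gpos by simp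
  have iff: "int n dvd int k * c \<longleftrightarrow> n' dvd int k" for k
  proof -
    have "int n dvd int k * c \<longleftrightarrow> g * n' dvd g * (int k * c')" by (simp add: n' c' algebra_simps)
    also have "\<dots> \<longleftrightarrow> n' dvd int k * c'" using gpos by simp
    also have "\<dots> \<longleftrightarrow> n' dvd int k" using cop by (simp add: coprime_dvd_mult_left_iff)
    finally show ?thesis .
  qed
  show ?thesis unfolding iff g_def[symmetric] nd
  proof (rule Least_equality)
    show "0 < nat n' \<and> n' dvd int (nat n')" using n'pos by simp
  next
    fix y :: nat assume "0 < y \<and> n' dvd int y"
    then show "nat n' \<le> y" using zdvd_imp_le[of n' "int y"] by linarith
  qed
qed

lemma YQn_char:
  assumes "quadratic_form Q" "y \<in> Ylat"
  shows "y \<in> YQn Q n \<longleftrightarrow> (\<forall>j\<in>{1..4}. int n dvd BQ Q y (simple_root j))"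
proof
  assume "y \<in> YQn Q n" then show "\<forall>j\<in>{1..4}. int n dvd BQ Q y (simple_root j)"
    using Ylat_sr by (auto simp: YQn_def)
next
  assume h: "\<forall>j\<in>{1..4}. int n dvd BQ Q y (simple_root j)"
  have "int n dvd BQ Q y z" if "z \<in> Ylat" for z
  proof -
    have "BQ Q y z = z 1 * BQ Q y (simple_root 1) + z 2 * BQ Q y (simple_root 2)
       + z 3 * BQ Q y (simple_root 3) + z 4 * BQ Q y (simple_root 4)"
      using BQ_lin1[OF assms(1) that assms(2)] BQ_sym[of Q] by metis
    then show ?thesis using h by simp
  qed
  then show "y \<in> YQn Q n" using assms by (auto simp: YQn_def)
qed

definition B0 :: "nat \<Rightarrow> nat \<Rightarrow> int" where
  "B0 i j = (if i = j then (if i \<le> 2 then 2 else 4)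
     else if {i, j} = {1, 2} then -1
     else if {i, j} = {2, 3} then -2
     else if {i, j} = {3, 4} then -2 else 0)"

lemma B0_vals[simp]:
  "B0 1 1 = 2" "B0 1 2 = -1" "B0 1 3 = 0" "B0 1 4 = 0"
  "B0 2 1 = -1" "B0 2 2 = 2" "B0 2 3 = -2" "B0 2 4 = 0"
  "B0 3 1 = 0" "B0 3 2 = -2" "B0 3 3 = 4" "B0 3 4 = -2"
  "B0 4 1 = 0" "B0 4 2 = 0" "B0 4 3 = -2" "B0 4 4 = 4"
  "B0 (Suc 0) (Suc 0) = 2" "B0 (Suc 0) 2 = -1" "B0 (Suc 0) 3 = 0" "B0 (Suc 0) 4 = 0"
  "B0 2 (Suc 0) = -1" "B0 3 (Suc 0) = 0" "B0 4 (Suc 0) = 0"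
  by (auto simp: B0_def doubleton_eq_iff)

lemma bb_B0:
  assumes "quadratic_form Q" "weyl_invariant Q" "i \<in> {1..4}" "j \<in> {1..4}"
  shows "bb Q i j = Q (simple_root 1) * B0 i j"
proof -
  have "i = 1 \<or> i = 2 \<or> i = 3 \<or> i = 4" "j = 1 \<or> j = 2 \<or> j = 3 \<or> j = 4" using assms(3,4) by auto
  then show ?thesis using bb_vals[OF assms(1,2)] bb_sym[of Q]
    by (elim disjE) (simp_all add: algebra_simps)
qed

definition mrow :: "vec \<Rightarrow> nat \<Rightarrow> int" where
  "mrow a j = (\<Sum>i\<in>{1..4}. coroot a i * B0 i j)"

definition glen :: "vec \<Rightarrow> int" where
  "glen a = (if rip a a = 4 then 1 else 2)"

lemma roots_list: "F4_pos_roots = set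
    [v4 1 0 0 0, v4 0 1 0 0, v4 1 1 0 0, v4 0 1 2 0, v4 1 1 2 0, v4 1 2 2 0,
     v4 0 1 2 2, v4 1 1 2 2, v4 1 2 2 2, v4 1 2 4 2, v4 1 3 4 2, v4 2 3 4 2,
     v4 0 0 1 0, v4 0 0 0 1, v4 0 0 1 1, v4 0 1 1 0, v4 1 1 1 0, v4 0 1 1 1,
     v4 1 1 1 1, v4 0 1 2 1, v4 1 1 2 1, v4 1 2 2 1, v4 1 2 3 1, v4 1 2 3 2]"
  by (simp add: F4_pos_roots_def)



lemma rip_v4: "rip (v4 a b c d) (v4 a b c d) = 4*a*a+4*b*b+2*c*c+2*d*d-4*a*b-4*b*c-2*c*d"
  unfolding rip_def sum4 by (simp add: algebra_simps)

lemma coroot_v4: "coroot (v4 a b c d) = (let r = rip (v4 a b c d) (v4 a b c d) in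
   v4 (a*4 div r) (b*4 div r) (c*2 div r) (d*2 div r))"
  by (rule ext) (simp add: coroot_def Let_def v4_def)

lemma mrow_v4: "coroot a = v4 c1 c2 c3 c4 \<Longrightarrow>
   mrow a 1 = 2*c1 - c2 \<and> mrow a 2 = -c1 + 2*c2 - 2*c3 \<and> mrow a 3 = -2*c2+4*c3-2*c4 \<and> mrow a 4 = -2*c3+4*c4"
  unfolding mrow_def sum4 by simp

lemma ex4: "(\<exists>j\<in>{1..4::nat}. P j) \<longleftrightarrow> P 1 \<or> P 2 \<or> P 3 \<or> P 4"
proof -
  have "{1..4::nat} = {1,2,3,4}" by auto
  then show ?thesis by simp
qed
lemma al4: "(\<forall>j\<in>{1..4::nat}. P j) \<longleftrightarrow> P 1 \<and> P 2 \<and> P 3 \<and> P 4"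
  using ex4[of "\<lambda>j. \<not> P j"] by blast


lemma mrow_prop:
  assumes "a \<in> F4_pos_roots"
  shows "(\<forall>j\<in>{1..4}. glen a dvd mrow a j) \<and> (\<exists>j\<in>{1..4}. mrow a j = glen a \<or> mrow a j = - glen a)"
  using assms unfolding roots_list set_simps insert_iff empty_iff ex4 al4 mrow_def sum4
  apply (elim disjE)
  apply (simp_all add: coroot_v4 rip_v4 glen_def)
  done


lemma pos_Ylat: "a \<in> F4_pos_roots \<Longrightarrow> a \<in> Ylat"
  unfolding roots_list by (auto simp: Ylat_v4)

lemma coroot_Ylat: "a \<in> Ylat \<Longrightarrow> coroot a \<in> Ylat"
  by (auto simp: Ylat_def coroot_def)

lemma BQ_row:
  assumes "quadratic_form Q" "weyl_invariant Q" "a \<in> F4_pos_roots" "j \<in> {1..4}"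
  shows "BQ Q (coroot a) (simple_root j) = Q (simple_root 1) * mrow a j"
proof -
  have c: "coroot a \<in> Ylat" using assms(3) by (intro coroot_Ylat pos_Ylat)
  have "BQ Q (coroot a) (simple_root j) = coroot a 1 * bb Q 1 j + coroot a 2 * bb Q 2 j
                  + coroot a 3 * bb Q 3 j + coroot a 4 * bb Q 4 j"
    using BQ_lin1[OF assms(1) c Ylat_sr[OF assms(4)]] by (simp add: bb_def)
  also have "\<dots> = Q (simple_root 1) * mrow a j"
    using bb_B0[OF assms(1,2) _ assms(4), of 1] bb_B0[OF assms(1,2) _ assms(4), of 2]
      bb_B0[OF assms(1,2) _ assms(4), of 3] bb_B0[OF assms(1,2) _ assms(4), of 4]
    unfolding mrow_def sum4 by (simp add: algebra_simps)
  finally show ?thesis .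
qed

lemma ntil_root:
  assumes "quadratic_form Q" "weyl_invariant Q" "1 \<le> n" "a \<in> F4_pos_roots"
  shows "n_til Q n a = nat (int n div gcd (int n) (glen a * Q (simple_root 1)))"
proof -
  define q where "q = Q (simple_root 1)"
  have c: "coroot a \<in> Ylat" using assms(4) by (intro coroot_Ylat pos_Ylat)
  have key: "smul (int k) (coroot a) \<in> YQn Q n \<longleftrightarrow> int n dvd int k * (glen a * q)" for k
  proof -
    have "smul (int k) (coroot a) \<in> YQn Q n \<longleftrightarrow>
          (\<forall>j\<in>{1..4}. int n dvd BQ Q (smul (int k) (coroot a)) (simple_root j))"
      using YQn_char[OF assms(1) Ylat_smul[OF c]] by simp
    also have "\<dots> \<longleftrightarrow> (\<forall>j\<in>{1..4}. int n dvd int k * (q * mrow a j))"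
      using BQ_smul[OF assms(1) c Ylat_sr] BQ_row[OF assms(1,2,4)] by (simp add: q_def)
    also have "\<dots> \<longleftrightarrow> int n dvd int k * (glen a * q)"
    proof
      assume h: "\<forall>j\<in>{1..4}. int n dvd int k * (q * mrow a j)"
      obtain j :: nat where j: "j \<in> {1..4}" "mrow a j = glen a \<or> mrow a j = - glen a"
        using mrow_prop[OF assms(4)] by blast
      then show "int n dvd int k * (glen a * q)" using h[rule_format, OF j(1)]
        by (auto simp: algebra_simps)
    next
      assume h: "int n dvd int k * (glen a * q)"
      show "\<forall>j\<in>{1..4}. int n dvd int k * (q * mrow a j)"
      proof
        fix j :: nat assume "j \<in> {1..4}"
        then obtain t where "mrow a j = glen a * t" using mrow_prop[OF assms(4)] by (meson dvdE)
        then have e: "int k * (q * mrow a j) = (int k * (glen a * q)) * t" by (simp add: algebra_simps)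
        show "int n dvd int k * (q * mrow a j)" unfolding e using h by (rule dvd_mult2)
      qed
    qed
    finally show ?thesis .
  qed
  have "n_til Q n a = (LEAST k::nat. 0 < k \<and> int n dvd int k * (glen a * q))"
    unfolding n_til_def using key by simp
  also have "\<dots> = nat (int n div gcd (int n) (glen a * q))" by (rule least_dvd[OF assms(3)])
  finally show ?thesis by (simp add: q_def)
qed



lemma s1: "{1..11::int} = {1,2,3,4,5,6,7,8,9,10,11}" by (rule set_eqI) (simp; presburger)
lemma s2: "{1..8::int} = {1,2,3,4,5,6,7,8}" by (rule set_eqI) (simp; presburger)

lemma set_ht: "(\<lambda>a. \<Sum>i\<in>{1..4}. a i) ` F4_pos_roots = {1..11}"
  unfolding roots_list s1 by (simp add: sum4 sum4' insert_commute)

lemma set_cs: "(\<lambda>a. coroot a 1 + coroot a 2 + coroot a 3 + coroot a 4) ` F4_pos_roots = {1..11}"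
  unfolding roots_list s1 by (simp add: coroot_v4 rip_v4 insert_commute)

lemma set_h1: "(\<lambda>a. (\<Sum>i\<in>{1..4}. a i) * (if glen a = 1 then 1 else 2)) ` F4_pos_roots
   = (\<lambda>k. 2*k) ` {1..8} \<union> {1,3,5,7,9,11}"
  unfolding roots_list s2 by (simp add: sum4 sum4' glen_def rip_v4 insert_commute)

lemma set_x1: "(\<lambda>a. coroot a 1 + coroot a 2 + 2 * coroot a 3 + 2 * coroot a 4) ` F4_pos_roots
   = (\<lambda>k. 2*k) ` {1..8} \<union> {1,3,5,7,9,11}"
  unfolding roots_list s2 by (simp add: coroot_v4 rip_v4 insert_commute)



lemma ndiv_pos: "1 \<le> n \<Longrightarrow> 0 < nat (int n div gcd (int n) c)"
proof -
  assume n: "1 \<le> n"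
  have g: "0 < gcd (int n) c" using n by simp
  have "gcd (int n) c \<le> int n" using n by (intro zdvd_imp_le) auto
  then have "0 < int n div gcd (int n) c" using g by (simp add: pos_imp_zdiv_pos_iff)
  then show ?thesis by simp
qed

lemma sr1': "simple_root (Suc 0) = v4 1 0 0 0" using sr_v4(1) by simp

lemma img_scale: "(\<lambda>a. of_int (h a) * (t::rat)) ` A = (\<lambda>k. of_int k * t) ` (h ` A)"
  by (simp add: image_image)

theorem lemma3p5:
  fixes Q :: "vec \<Rightarrow> int" and n :: nat
  assumes "1 \<le> n" and "quadratic_form Q" and "weyl_invariant Q"
  shows "(n_al Q n (simple_root 1) = 2 * n_al Q n (simple_root 4) \<longrightarrow>
            fX Q n ` coroot ` F4_pos_roots = fY Q n ` F4_pos_roots \<and>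
            fY Q n ` F4_pos_roots =
              (\<lambda>k::int. of_int k / of_nat (n_al Q n (simple_root 4))) ` {1..8} \<union>
              (\<lambda>k::int. of_int k / of_nat (2 * n_al Q n (simple_root 4))) ` {1, 3, 5, 7, 9, 11})
       \<and> ((\<forall>i\<in>{1..4}. \<forall>j\<in>{1..4}. n_al Q n (simple_root i) = n_al Q n (simple_root j)) \<longrightarrow>
            fX Q n ` coroot ` F4_pos_roots = fY Q n ` F4_pos_roots \<and>
            fY Q n ` F4_pos_roots =
              (\<lambda>k::int. of_int k / of_nat (n_al Q n (simple_root 1))) ` {1..11})"
proof -
  define q where "q = Q (simple_root 1)"
  define N1 where "N1 = nat (int n div gcd (int n) q)"
  define N2 where "N2 = nat (int n div gcd (int n) (2 * q))"
  have N1pos: "0 < N1" unfolding N1_def using assms(1) by (rule ndiv_pos)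
  have N2pos: "0 < N2" unfolding N2_def using assms(1) by (rule ndiv_pos)
  have ntil: "n_til Q n a = (if glen a = 1 then N1 else N2)" if "a \<in> F4_pos_roots" for a
    using ntil_root[OF assms(2,3,1) that] unfolding N1_def N2_def q_def glen_def by simp
  have srP: "simple_root i \<in> F4_pos_roots" if "i \<in> {1..4}" for i
  proof -
    have "i = 1 \<or> i = 2 \<or> i = 3 \<or> i = 4" using that by auto
    then show ?thesis unfolding roots_list by (auto simp: sr_v4 sr1')
  qed
  have gl: "glen (simple_root 1) = 1" "glen (simple_root 2) = 1"
    "glen (simple_root 3) = 2" "glen (simple_root 4) = 2"
    unfolding sr_v4 by (simp_all add: glen_def rip_v4)
  have nt: "n_til Q n (simple_root 1) = N1" "n_til Q n (simple_root 2) = N1"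
    "n_til Q n (simple_root 3) = N2" "n_til Q n (simple_root 4) = N2"
    using ntil[OF srP] gl by auto
  have cr1: "coroot (simple_root 1) = simple_root 1" and cr4: "coroot (simple_root 4) = simple_root 4"
    unfolding sr_v4 by (simp_all add: coroot_v4 rip_v4)
  have Q4: "Q (simple_root 4) = 2 * q"
    using Q2_v4[OF assms(2), of 0 0 0 1] bb_vals(4)[OF assms(2,3)] unfolding sr_v4 q_def by simp
  have na1: "n_al Q n (simple_root 1) = N1" unfolding n_al_def cr1 N1_def q_def ..
  have na4: "n_al Q n (simple_root 4) = N2" unfolding n_al_def cr4 N2_def Q4 ..
  define ht where "ht a = (\<Sum>i\<in>{1..4}. a i)" for a :: vec
  have fY: "fY Q n a = of_int (ht a) / of_nat (if glen a = 1 then N1 else N2)" if "a \<in> F4_pos_roots" for a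
    unfolding fY_def ntil[OF that] ht_def ..
  have fX: "fX Q n (coroot a) = of_int (coroot a 1) / of_nat N1 + of_int (coroot a 2) / of_nat N1
       + of_int (coroot a 3) / of_nat N2 + of_int (coroot a 4) / of_nat N2" for a
    unfolding fX_def sum4 nt ..
  have imX: "fX Q n ` coroot ` F4_pos_roots = (\<lambda>a. fX Q n (coroot a)) ` F4_pos_roots"
    by (simp add: image_image)
  have c1: "fX Q n ` coroot ` F4_pos_roots = fY Q n ` F4_pos_roots \<and>
            fY Q n ` F4_pos_roots =
              (\<lambda>k::int. of_int k / of_nat (n_al Q n (simple_root 4))) ` {1..8} \<union>
              (\<lambda>k::int. of_int k / of_nat (2 * n_al Q n (simple_root 4))) ` {1, 3, 5, 7, 9, 11}"
    if h: "n_al Q n (simple_root 1) = 2 * n_al Q n (simple_root 4)"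
  proof -
    have NN: "N1 = 2 * N2" using h na1 na4 by simp
    define t :: rat where "t = 1 / of_nat (2 * N2)"
    have N2r: "(of_nat N2 :: rat) > 0" using N2pos by simp
    have eY: "fY Q n a = of_int (ht a * (if glen a = 1 then 1 else 2)) * t" if "a \<in> F4_pos_roots" for a
      unfolding fY[OF that] t_def NN using N2r by (simp add: field_simps)
    have eX: "fX Q n (coroot a) = of_int (coroot a 1 + coroot a 2 + 2 * coroot a 3 + 2 * coroot a 4) * t" for a
      unfolding fX t_def NN using N2r by (simp add: field_simps)
    have Y: "fY Q n ` F4_pos_roots = (\<lambda>k. of_int k * t) ` ((\<lambda>k. 2*k) ` {1..8} \<union> {1,3,5,7,9,11})"
    proof -
      have "fY Q n ` F4_pos_roots = (\<lambda>a. of_int (ht a * (if glen a = 1 then 1 else 2)) * t) ` F4_pos_roots"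
        using eY by (rule image_cong[OF refl])
      also have "\<dots> = (\<lambda>k. of_int k * t) ` ((\<lambda>k. 2*k) ` {1..8} \<union> {1,3,5,7,9,11})"
        by (subst img_scale) (simp only: ht_def set_h1)
      finally show ?thesis .
    qed
    have X: "fX Q n ` coroot ` F4_pos_roots = (\<lambda>k. of_int k * t) ` ((\<lambda>k. 2*k) ` {1..8} \<union> {1,3,5,7,9,11})"
      unfolding imX eX by (subst img_scale) (simp only: set_x1)
    have R: "(\<lambda>k::int. of_int k / of_nat (n_al Q n (simple_root 4))) ` {1..8} \<union>
              (\<lambda>k::int. of_int k / of_nat (2 * n_al Q n (simple_root 4))) ` {1, 3, 5, 7, 9, 11}
           = (\<lambda>k. of_int k * t) ` ((\<lambda>k. 2*k) ` {1..8} \<union> {1,3,5,7,9,11})"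
    proof -
      have a: "(\<lambda>k::int. of_int k / of_nat N2 :: rat) = (\<lambda>k. of_int (2*k) * t)"
        unfolding t_def using N2r by (auto simp: field_simps)
      have b: "(\<lambda>k::int. of_int k / of_nat (2*N2) :: rat) = (\<lambda>k. of_int k * t)"
        unfolding t_def using N2r by (auto simp: field_simps)
      show ?thesis unfolding na4 a b image_Un image_image by (rule refl)
    qed
    show ?thesis unfolding X Y R by (rule conjI refl)+
  qed
  have c2: "fX Q n ` coroot ` F4_pos_roots = fY Q n ` F4_pos_roots \<and>
            fY Q n ` F4_pos_roots =
              (\<lambda>k::int. of_int k / of_nat (n_al Q n (simple_root 1))) ` {1..11}"
    if h: "\<forall>i\<in>{1..4}. \<forall>j\<in>{1..4}. n_al Q n (simple_root i) = n_al Q n (simple_root j)"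
  proof -
    have NN: "N1 = N2" using h na1 na4 by force
    define t :: rat where "t = 1 / of_nat N1"
    have N1r: "(of_nat N1 :: rat) > 0" using N1pos by simp
    have eY: "fY Q n a = of_int (ht a) * t" if "a \<in> F4_pos_roots" for a
      unfolding fY[OF that] t_def NN by simp
    have eX: "fX Q n (coroot a) = of_int (coroot a 1 + coroot a 2 + coroot a 3 + coroot a 4) * t" for a
      unfolding fX t_def NN using N1r NN by (simp add: field_simps)
    have Y: "fY Q n ` F4_pos_roots = (\<lambda>k. of_int k * t) ` {1..11}"
    proof -
      have "fY Q n ` F4_pos_roots = (\<lambda>a. of_int (ht a) * t) ` F4_pos_roots"
        using eY by (rule image_cong[OF refl])
      also have "\<dots> = (\<lambda>k. of_int k * t) ` {1..11}"
        by (subst img_scale) (simp only: ht_def[abs_def] set_ht)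
      finally show ?thesis .
    qed
    have X: "fX Q n ` coroot ` F4_pos_roots = (\<lambda>k. of_int k * t) ` {1..11}"
      unfolding imX eX by (subst img_scale) (simp only: set_cs)
    have R: "(\<lambda>k::int. of_int k / of_nat (n_al Q n (simple_root 1)) :: rat) = (\<lambda>k. of_int k * t)"
      unfolding na1 t_def by (simp add: field_simps)
    show ?thesis unfolding X Y R by (rule conjI refl)+
  qed
  show ?thesis using c1 c2 by blast
qed


end
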